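(* Let $\mathcal{M}$, $\sigma_*$, $\sigma$, $\bar x$, $\delta$, $\phi$, $\mathcal{D}$ and $\bar\phi$ be as described in the context. Then $\bar\phi$ is well defined with values in $N^{\mathrm{red}}_{\mathcal{M}}(\bar x)$, it is locally symmetric in the sense that $\bar\phi(\sigma'x)=\bar\phi(x)$ for all $x\in\mathcal{D}$ and all $\sigma'\in\Sigma^n$ with $\sigma'\bar x=\bar x$, and it is a local equation of $\mathcal{M}$ around $\bar x$: for $x\in\mathcal{D}$ one has $\bar\phi(x)=0$ iff $x\in\mathcal{M}\cap B(\bar x,\delta)$, and the Jacobian of $\bar\phi$ at $\bar x$, as a linear map from $T_{\mathcal{M}}(\bar x)\oplus N^{\mathrm{red}}_{\mathcal{M}}(\bar x)$ to $N^{\mathrm{red}}_{\mathcal{M}}(\bar x)$, is onto.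
   Context: $\Sigma^n$ permutations of $\mathbb{N}_n$ acting by $(\sigma x)_i=x_{\sigma^{-1}(i)}$; $P(\sigma)$ orbit partition; $P(x)$ partition by equal coordinates; $\Delta(\sigma)=\{x:P(x)=P(\sigma)\}$; $\Delta(\sigma)^{\perp\perp}=\{x:x_i=x_j$ whenever $i,j$ lie in the same set of $P(\sigma)\}$ and $\Delta(\sigma)^\perp$ its orthogonal complement; $\mathbb{R}^n_\ge=\{x:x_1\ge\cdots\ge x_n\}$; $B(x,\delta)$ open ball. A set $S$ is locally symmetric if $S\cap\mathbb{R}^n_\ge\ne\emptyset$ and each $x\in S$ has $\delta>0$ with $\sigma(S\cap B(x,\delta))=S\cap B(x,\delta)$ for all $y\in S\cap B(x,\delta)$, all $\sigma$ with $\sigma y=y$ (strongly locally symmetric: $\sigma S=S$ for all $y\in S$, all $\sigma$ with $\sigma y=y$). $\mathcal{M}$ is a locally symmetric $C^2$ submanifold (connected, without boundary) of dimension $d$, with characteristic permutation $\sigma_*$ (i.e. $\mathcal{M}\cap B(y,\rho)\subset\Delta(\sigma_* )$ for some $y\in\mathcal{M}$, $\rho>0$); $\kappa_*=|\mathbb{N}_n\setminus\mathrm{supp}(\sigma_* )|$. For $x\in\mathbb{R}^n$, $x^F\in\mathbb{R}^{\kappa_*}$ collects the coordinates with indices in $\mathbb{N}_n\setminus\mathrm{supp}(\sigma_* )$ and $x^M\in\mathbb{R}^{n-\kappa_*}$ the others (in increasing index order), and $x^F\otimes x^M$ denotes the inverse reassembling. Fix $\bar x\in\mathcal{M}\cap\Delta(\sigma)$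 and $\delta>0$ such that: $B(\bar x,\delta)$ meets only strata $\Delta(\sigma')$ with $P(\sigma')$ refining $P(\sigma)$; $\mathcal{M}\cap B(\bar x,\delta)$ is strongly locally symmetric; and the orthogonal projection $\bar\pi_T$ onto $\bar x+T_{\mathcal{M}}(\bar x)$ restricted to $\mathcal{M}\cap B(\bar x,\delta)$ is a diffeomorphism onto its image. Let $\phi:(\bar x+T_{\mathcal{M}}(\bar x))\cap B(\bar x,\delta)\to N_{\mathcal{M}}(\bar x)$ be the $C^2$ map with $\mathcal{M}\cap B(\bar x,\delta)=\{x+\phi(x)\}$. Set $N^{\mathrm{red}}_{\mathcal{M}}(\bar x)=N_{\mathcal{M}}(\bar x)\cap\Delta(\sigma)^{\perp\perp}$, choose $\delta_1,\delta_2>0$ with $\mathcal{B}:=B(\bar x^F,\delta_1)\otimes B(\bar x^M,\delta_2)\subset B(\bar x,\delta)$, and $\mathcal{D}=(\bar x+T_{\mathcal{M}}(\bar x)\oplus N^{\mathrm{red}}_{\mathcal{M}}(\bar x))\cap\mathcal{B}$. Let $\bar\pi^{\mathrm{red}}_N$ be the orthogonal projection onto $\bar x+N^{\mathrm{red}}_{\mathcal{M}}(\bar x)$ and define $\bar\phi(x)=\bar x+\phi(\bar\pi_T(x))-\bar\pi^{\mathrm{red}}_N(x)$ for $x\in\mathcal{D}$. *)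

theory Defs
  imports "HOL-Analysis.Analysis" "HOL-Combinatorics.Permutations"
begin

text \<open>Points of R^n are vectors (real,'n) vec, the finite index type 'n (with its linear
order) playing the role of N_n = {1,...,n}.\<close>

definition pact :: "('n::finite \<Rightarrow> 'n) \<Rightarrow> (real,'n) vec \<Rightarrow> (real,'n) vec" where
  "pact \<sigma> x = (\<chi> i. x $ (inv \<sigma> i))"

definition same_orbit :: "('n \<Rightarrow> 'n) \<Rightarrow> 'n \<Rightarrow> 'n \<Rightarrow> bool" where
  "same_orbit \<sigma> i j \<longleftrightarrow> (\<exists>k. (\<sigma> ^^ k) i = j)"

text \<open>Stratum Delta(sigma) = {x. P(x) = P(sigma)}.\<close>
definition stratum :: "('n::finite \<Rightarrow> 'n) \<Rightarrow> ((real,'n) vec) set" where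
  "stratum \<sigma> = {x. \<forall>i j. x $ i = x $ j \<longleftrightarrow> same_orbit \<sigma> i j}"

text \<open>Delta(sigma)^perp-perp: vectors constant on each set of P(sigma).\<close>
definition stratum_span :: "('n::finite \<Rightarrow> 'n) \<Rightarrow> ((real,'n) vec) set" where
  "stratum_span \<sigma> = {x. \<forall>i j. same_orbit \<sigma> i j \<longrightarrow> x $ i = x $ j}"

definition refines :: "('n \<Rightarrow> 'n) \<Rightarrow> ('n \<Rightarrow> 'n) \<Rightarrow> bool" where
  "refines \<sigma>' \<sigma> \<longleftrightarrow> (\<forall>i j. same_orbit \<sigma>' i j \<longrightarrow> same_orbit \<sigma> i j)"

definition dec_cone :: "((real,'n::{finite,linorder}) vec) set" where
  "dec_cone = {x. \<forall>i j. i \<le> j \<longrightarrow> x $ j \<le> x $ i}"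

definition locally_symmetric :: "((real,'n::{finite,linorder}) vec) set \<Rightarrow> bool" where
  "locally_symmetric S \<longleftrightarrow> S \<inter> dec_cone \<noteq> {} \<and>
     (\<forall>x\<in>S. \<exists>\<delta>>0. \<forall>y\<in>S \<inter> ball x \<delta>. \<forall>\<sigma>. \<sigma> permutes UNIV \<and> pact \<sigma> y = y \<longrightarrow>
        pact \<sigma> ` (S \<inter> ball x \<delta>) = S \<inter> ball x \<delta>)"

definition strongly_locally_symmetric :: "((real,'n::{finite,linorder}) vec) set \<Rightarrow> bool" where
  "strongly_locally_symmetric S \<longleftrightarrow> S \<inter> dec_cone \<noteq> {} \<and>
     (\<forall>y\<in>S. \<forall>\<sigma>. \<sigma> permutes UNIV \<and> pact \<sigma> y = y \<longrightarrow> pact \<sigma> ` S = S)"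

text \<open>C^1 / C^2 maps on a set S (derivatives taken within S; for open S this is the
usual notion).\<close>
definition C1_on :: "'a::real_normed_vector set \<Rightarrow> ('a \<Rightarrow> 'b::real_normed_vector) \<Rightarrow> bool" where
  "C1_on S f \<longleftrightarrow> (\<exists>f'. (\<forall>x\<in>S. (f has_derivative blinfun_apply (f' x)) (at x within S))
                      \<and> continuous_on S f')"

definition C2_on :: "'a::real_normed_vector set \<Rightarrow> ('a \<Rightarrow> 'b::real_normed_vector) \<Rightarrow> bool" where
  "C2_on S f \<longleftrightarrow> (\<exists>f'. (\<forall>x\<in>S. (f has_derivative blinfun_apply (f' x)) (at x within S))
                      \<and> C1_on S f')"

definition C2_submanifold :: "((real,'n::finite) vec) set \<Rightarrow> nat \<Rightarrow> bool" where
  "C2_submanifold M d \<longleftrightarrow> (\<forall>p\<in>M. \<exists>U W (\<psi> :: (real,'n) vec \<Rightarrow> (real,'n) vec) L. open U \<and> p \<in> U \<and> open W \<and>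
      bij_betw \<psi> U W \<and> C2_on U \<psi> \<and> C2_on W (the_inv_into U \<psi>) \<and>
      subspace L \<and> dim L = d \<and> \<psi> ` (M \<inter> U) = L \<inter> W)"

definition tangent_space :: "((real,'n::finite) vec) set \<Rightarrow> (real,'n) vec \<Rightarrow> ((real,'n) vec) set" where
  "tangent_space M x = {v. \<exists>\<gamma> e. e > 0 \<and> \<gamma> 0 = x \<and> (\<forall>t\<in>{-e<..<e}. \<gamma> t \<in> M) \<and>
                                (\<gamma> has_vector_derivative v) (at 0)}"

definition normal_space :: "((real,'n::finite) vec) set \<Rightarrow> (real,'n) vec \<Rightarrow> ((real,'n) vec) set" where
  "normal_space M x = {w. \<forall>v\<in>tangent_space M x. w \<bullet> v = 0}"

definition characteristic_perm :: "((real,'n::finite) vec) set \<Rightarrow> ('n \<Rightarrow> 'n) \<Rightarrow> bool" where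
  "characteristic_perm M \<sigma> \<longleftrightarrow> \<sigma> permutes UNIV \<and>
     (\<exists>y\<in>M. \<exists>\<rho>>0. M \<inter> ball y \<rho> \<subseteq> stratum \<sigma>)"

definition aff :: "'a::real_vector \<Rightarrow> 'a set \<Rightarrow> 'a set" where
  "aff p V = {p + v | v. v \<in> V}"

definition orth_proj :: "'a::real_inner set \<Rightarrow> 'a \<Rightarrow> 'a" where
  "orth_proj A x = (THE p. p \<in> A \<and> (\<forall>a\<in>A. \<forall>b\<in>A. (x - p) \<bullet> (a - b) = 0))"

definition direct_sum :: "'a::real_vector set \<Rightarrow> 'a set \<Rightarrow> 'a set" where
  "direct_sum V W = {v + w | v w. v \<in> V \<and> w \<in> W}"

definition diffeo_onto_image :: "'a::real_normed_vector set \<Rightarrow> ('a \<Rightarrow> 'a) \<Rightarrow> bool" where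
  "diffeo_onto_image S f \<longleftrightarrow> inj_on f S \<and> C2_on S f \<and> C2_on (f ` S) (the_inv_into S f)"

end

theory Submission
  imports Defs
begin



lemma pact_nth[simp]: "pact \<sigma> x $ i = x $ inv \<sigma> i" by (simp add: pact_def)
lemma pact_add: "pact \<sigma> (x + y) = pact \<sigma> x + pact \<sigma> y" by (simp add: vec_eq_iff)
lemma pact_diff: "pact \<sigma> (x - y) = pact \<sigma> x - pact \<sigma> y" by (simp add: vec_eq_iff)
lemma pact_scale: "pact \<sigma> (c *\<^sub>R x) = c *\<^sub>R pact \<sigma> x" by (simp add: vec_eq_iff)
lemma pact_zero[simp]: "pact \<sigma> 0 = 0" by (simp add: vec_eq_iff)
lemma pact_uminus: "pact \<sigma> (- x) = - pact \<sigma> x" by (simp add: vec_eq_iff)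
lemma linear_pact: "linear (pact \<sigma>)"
  by (rule linearI) (auto simp: pact_add pact_scale)
lemma bounded_linear_pact: "bounded_linear (pact \<sigma>)"
  using linear_pact linear_conv_bounded_linear by blast

lemma pact_inv_pact: assumes "\<sigma> permutes UNIV" shows "pact (inv \<sigma>) (pact \<sigma> x) = x"
  by (simp add: vec_eq_iff permutes_inv_inv[OF assms] permutes_inverses(2)[OF assms])
lemma pact_pact_inv: assumes "\<sigma> permutes UNIV" shows "pact \<sigma> (pact (inv \<sigma>) x) = x"
  by (simp add: vec_eq_iff permutes_inv_inv[OF assms] permutes_inverses(1)[OF assms])

lemma pact_inner: assumes "\<sigma> permutes UNIV" shows "pact \<sigma> x \<bullet> pact \<sigma> y = x \<bullet> y"
proof -
  have p: "inv \<sigma> permutes UNIV" using permutes_inv[OF assms] .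
  have "pact \<sigma> x \<bullet> pact \<sigma> y = (\<Sum>i\<in>UNIV. x $ inv \<sigma> i * y $ inv \<sigma> i)"
    by (simp add: inner_vec_def)
  also have "\<dots> = (\<Sum>i\<in>UNIV. x $ i * y $ i)"
    using sum.permute[OF p, of "\<lambda>i. x $ i * y $ i"] by (simp add: o_def)
  finally show ?thesis by (simp add: inner_vec_def)
qed

lemma pact_norm: assumes "\<sigma> permutes UNIV" shows "norm (pact \<sigma> x) = norm x"
  using pact_inner[OF assms, of x x] by (simp add: norm_eq_sqrt_inner)

lemma pact_fix_inv: assumes "\<sigma> permutes UNIV" "pact \<sigma> x = x" shows "pact (inv \<sigma>) x = x"
  using pact_inv_pact[OF assms(1), of x] assms(2) by simp



lemma orth_proj_eq:
  fixes V :: "'a::euclidean_space set"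
  assumes "subspace V" "v \<in> V" "\<forall>u\<in>V. w \<bullet> u = 0"
  shows "orth_proj (aff p V) (p + v + w) = p + v"
  unfolding orth_proj_def
proof (rule the_equality)
  show "p + v \<in> aff p V \<and> (\<forall>a\<in>aff p V. \<forall>b\<in>aff p V. (p + v + w - (p + v)) \<bullet> (a - b) = 0)"
    using assms by (auto simp: aff_def inner_diff_right inner_add_right subspace_diff)
next
  fix q assume q: "q \<in> aff p V \<and> (\<forall>a\<in>aff p V. \<forall>b\<in>aff p V. (p + v + w - q) \<bullet> (a - b) = 0)"
  then obtain u where u: "u \<in> V" "q = p + u" by (auto simp: aff_def)
  have a: "p + v \<in> aff p V" using assms by (auto simp: aff_def)
  have "(p + v + w - q) \<bullet> ((p + v) - q) = 0" using q a by blast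
  hence "(v - u + w) \<bullet> (v - u) = 0" using u by (simp add: algebra_simps)
  moreover have "w \<bullet> (v - u) = 0" using assms u subspace_diff by blast
  ultimately have "(v - u) \<bullet> (v - u) = 0" by (simp add: inner_add_left)
  thus "q = p + v" using u by simp
qed

lemma decomp_exists:
  fixes V :: "'a::euclidean_space set"
  assumes "subspace V"
  obtains v w where "v \<in> V" "\<forall>u\<in>V. w \<bullet> u = 0" "z = v + w"
proof -
  obtain y z' where "y \<in> span V" "\<And>u. u \<in> span V \<Longrightarrow> orthogonal z' u" "z = y + z'"
    using orthogonal_subspace_decomp_exists by blast
  moreover have "span V = V" using assms by (simp add: span_eq_iff)
  ultimately show ?thesis using that by (auto simp: orthogonal_def)
qed

definition lproj :: "'a::euclidean_space \<Rightarrow> 'a set \<Rightarrow> 'a \<Rightarrow> 'a" where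
  "lproj p V z = orth_proj (aff p V) (p + z) - p"

lemma lproj_eq:
  fixes V :: "'a::euclidean_space set"
  assumes "subspace V" "v \<in> V" "\<forall>u\<in>V. w \<bullet> u = 0"
  shows "lproj p V (v + w) = v"
  using orth_proj_eq[OF assms, of p] by (simp add: lproj_def add.assoc)

lemma linear_lproj:
  fixes V :: "'a::euclidean_space set"
  assumes "subspace V"
  shows "linear (lproj p V)"
proof (rule linearI)
  fix x y
  obtain v1 w1 where 1: "v1 \<in> V" "\<forall>u\<in>V. w1 \<bullet> u = 0" "x = v1 + w1" using decomp_exists[OF assms] by metis
  obtain v2 w2 where 2: "v2 \<in> V" "\<forall>u\<in>V. w2 \<bullet> u = 0" "y = v2 + w2" using decomp_exists[OF assms] by metis
  have "x + y = (v1 + v2) + (w1 + w2)" using 1 2 by simp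
  moreover have "v1 + v2 \<in> V" using 1 2 assms subspace_add by blast
  moreover have "\<forall>u\<in>V. (w1 + w2) \<bullet> u = 0" using 1 2 by (simp add: inner_add_left)
  ultimately show "lproj p V (x + y) = lproj p V x + lproj p V y"
    using lproj_eq[OF assms] 1 2 by metis
next
  fix c :: real and x
  obtain v1 w1 where 1: "v1 \<in> V" "\<forall>u\<in>V. w1 \<bullet> u = 0" "x = v1 + w1" using decomp_exists[OF assms] by metis
  have "c *\<^sub>R x = c *\<^sub>R v1 + c *\<^sub>R w1" using 1 by (simp add: scaleR_add_right)
  moreover have "c *\<^sub>R v1 \<in> V" using 1 assms subspace_scale by blast
  moreover have "\<forall>u\<in>V. (c *\<^sub>R w1) \<bullet> u = 0" using 1 by simp
  ultimately show "lproj p V (c *\<^sub>R x) = c *\<^sub>R lproj p V x"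
    using lproj_eq[OF assms] 1 by metis
qed

lemma orth_proj_lproj: "orth_proj (aff p V) x = p + lproj p V (x - p)"
  by (simp add: lproj_def)

lemma deriv_in_subspace:
  fixes f :: "real \<Rightarrow> 'a::euclidean_space"
  assumes "(f has_vector_derivative v) (at 0)" "subspace C"
    "\<forall>\<^sub>F s in at 0. f s - f 0 \<in> C"
  shows "v \<in> C"
proof -
  have "((\<lambda>y. norm ((f y - f 0) - (y - 0) *\<^sub>R v) / norm (y - 0)) \<longlongrightarrow> 0) (at 0)"
    using assms(1) unfolding has_vector_derivative_def has_derivative_iff_norm by blast
  hence t: "((\<lambda>y. norm ((f y - f 0) - y *\<^sub>R v) / norm y) \<longlongrightarrow> 0) (at 0)" by simp
  have e: "\<forall>\<^sub>F y in at 0. norm ((f y - f 0) - y *\<^sub>R v) / norm y = norm ((f y - f 0) /\<^sub>R y - v)"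
    unfolding eventually_at_filter
  proof (rule always_eventually, intro allI impI)
    fix y :: real assume "y \<noteq> 0"
    hence "(f y - f 0) /\<^sub>R y - v = (1 / y) *\<^sub>R ((f y - f 0) - y *\<^sub>R v)"
      by (simp add: algebra_simps divide_inverse_commute)
    thus "norm ((f y - f 0) - y *\<^sub>R v) / norm y = norm ((f y - f 0) /\<^sub>R y - v)"
      by simp
  qed
  have "((\<lambda>y. norm ((f y - f 0) /\<^sub>R y - v)) \<longlongrightarrow> 0) (at 0)"
    using tendsto_cong[OF e] t by simp
  hence "((\<lambda>y. (f y - f 0) /\<^sub>R y - v) \<longlongrightarrow> 0) (at 0)"
    using tendsto_norm_zero_iff by blast
  hence lim: "((\<lambda>y. (f y - f 0) /\<^sub>R y) \<longlongrightarrow> v) (at 0)"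
    using Lim_null by blast
  have ev: "\<forall>\<^sub>F y in at 0. (f y - f 0) /\<^sub>R y \<in> C"
    using assms(3) by (rule eventually_mono) (simp add: assms(2) subspace_scale)
  show ?thesis
    by (rule Lim_in_closed_set[OF closed_subspace[OF assms(2)] ev _ lim]) simp
qed



lemma line_deriv:
  fixes f :: "'a::real_normed_vector \<Rightarrow> 'b::real_normed_vector"
  assumes "(f has_derivative F) (at p within S)" "e > 0" "\<forall>s. \<bar>s\<bar> < e \<longrightarrow> p + s *\<^sub>R z \<in> S"
  shows "((\<lambda>s. f (p + s *\<^sub>R z)) has_vector_derivative F z) (at 0)"
proof -
  let ?h = "\<lambda>s::real. p + s *\<^sub>R z"
  have h: "(?h has_derivative (\<lambda>s. s *\<^sub>R z)) (at 0 within {-e<..<e})"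
    by (auto intro!: derivative_eq_intros)
  have sub: "?h ` {-e<..<e} \<subseteq> S" using assms(3) by auto
  have g: "(f has_derivative F) (at (?h 0) within (?h ` {-e<..<e}))"
    using has_derivative_subset[OF assms(1) sub] by simp
  have bl: "bounded_linear F" using assms(1) has_derivative_bounded_linear by blast
  have "((\<lambda>s. f (?h s)) has_derivative (\<lambda>s. F (s *\<^sub>R z))) (at 0 within {-e<..<e})"
    by (rule has_derivative_in_compose[OF h g])
  hence "((\<lambda>s. f (?h s)) has_derivative (\<lambda>s. F (s *\<^sub>R z))) (at 0)"
    using at_within_open[of 0 "{-e<..<e}"] assms(2) by simp
  moreover have "(\<lambda>s. F (s *\<^sub>R z)) = (\<lambda>s. s *\<^sub>R F z)"
    using linear_cmul[OF bounded_linear.linear[OF bl]] by simp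
  ultimately show ?thesis unfolding has_vector_derivative_def by simp
qed

lemma tangent_subspace:
  fixes M :: "((real,'n::finite) vec) set"
  assumes "C2_submanifold M d" "p \<in> M"
  shows "subspace (tangent_space M p)"
proof -
  have "\<exists>U W (\<psi> :: (real,'n) vec \<Rightarrow> (real,'n) vec) L. open U \<and> p \<in> U \<and> open W \<and>
      bij_betw \<psi> U W \<and> C2_on U \<psi> \<and> C2_on W (the_inv_into U \<psi>) \<and>
      subspace L \<and> dim L = d \<and> \<psi> ` (M \<inter> U) = L \<inter> W"
    using assms(1) assms(2) unfolding C2_submanifold_def by (rule bspec)
  then obtain U W and \<psi> :: "(real,'n) vec \<Rightarrow> (real,'n) vec" and L where
    UW: "open U" "p \<in> U" "open W" "bij_betw \<psi> U W" "C2_on U \<psi>" "C2_on W (the_inv_into U \<psi>)"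
      "subspace L" "\<psi> ` (M \<inter> U) = L \<inter> W"
    by (elim exE conjE) 
  define g where "g = the_inv_into U \<psi>"
  obtain \<psi>' where \<psi>': "\<forall>x\<in>U. (\<psi> has_derivative blinfun_apply (\<psi>' x)) (at x within U)"
    using UW(5) unfolding C2_on_def by (elim exE conjE)
  obtain g' where g': "\<forall>x\<in>W. (g has_derivative blinfun_apply (g' x)) (at x within W)"
    using UW(6) unfolding C2_on_def g_def by (elim exE conjE)
  have inj: "inj_on \<psi> U" and img: "\<psi> ` U = W" using UW(4) by (auto simp: bij_betw_def)
  have gpsi: "\<And>x. x \<in> U \<Longrightarrow> g (\<psi> x) = x" using inj by (simp add: g_def the_inv_into_f_f)
  have pW: "\<psi> p \<in> W" using img UW(2) by blast
  define A where "A = blinfun_apply (\<psi>' p)"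
  define B where "B = blinfun_apply (g' (\<psi> p))"
  have "(\<psi> has_derivative A) (at p within U)" using \<psi>' UW(2) unfolding A_def by blast
  moreover have "at p within U = at p" by (rule at_within_open[OF UW(2,1)])
  ultimately have dA: "(\<psi> has_derivative A) (at p)" by simp
  have "(g has_derivative B) (at (\<psi> p) within W)" using g' pW unfolding B_def by blast
  moreover have "at (\<psi> p) within W = at (\<psi> p)" by (rule at_within_open[OF pW UW(3)])
  ultimately have dB: "(g has_derivative B) (at (\<psi> p))" by simp
  have "((g \<circ> \<psi>) has_derivative (B \<circ> A)) (at p)" by (rule diff_chain_at[OF dA dB])
  hence "(id has_derivative (B \<circ> A)) (at p)"
    by (rule has_derivative_transform_within_open[OF _ UW(1) UW(2)]) (simp add: gpsi)
  moreover have "(id has_derivative id) (at p)" unfolding id_def by (rule has_derivative_ident)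
  ultimately have BA: "B \<circ> A = id" by (rule has_derivative_unique)
  have linB: "linear B" unfolding B_def by (simp add: blinfun.bounded_linear_right bounded_linear.linear)
  have "tangent_space M p = B ` L"
  proof
    show "tangent_space M p \<subseteq> B ` L"
    proof
      fix v assume "v \<in> tangent_space M p"
      then obtain \<gamma> e where ge: "e > 0" "\<gamma> 0 = p" "\<forall>t\<in>{-e<..<e}. \<gamma> t \<in> M"
        "(\<gamma> has_vector_derivative v) (at 0)" unfolding tangent_space_def by blast
      have "continuous (at 0) \<gamma>" using ge(4) has_vector_derivative_continuous by blast
      hence "(\<gamma> \<longlongrightarrow> p) (at 0)" using ge(2) by (simp add: continuous_at)
      hence ev1: "\<forall>\<^sub>F t in at 0. \<gamma> t \<in> U" using UW(1,2) topological_tendstoD by blast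
      have ev2: "\<forall>\<^sub>F t in at (0::real). t \<in> {-e<..<e}"
        using eventually_at_in_open'[of "{-e<..<e}" 0] ge(1) by simp
      have ev: "\<forall>\<^sub>F t in at 0. (\<psi> \<circ> \<gamma>) t - (\<psi> \<circ> \<gamma>) 0 \<in> L"
        using ev1 ev2
      proof eventually_elim
        case (elim t)
        hence "\<gamma> t \<in> M \<inter> U" using ge(3) by blast
        hence "\<psi> (\<gamma> t) \<in> \<psi> ` (M \<inter> U)" by (rule imageI)
        hence "\<psi> (\<gamma> t) \<in> L" using UW(8) by simp
        moreover have "\<psi> p \<in> \<psi> ` (M \<inter> U)" using UW(2) assms(2) by blast
        hence "\<psi> p \<in> L" using UW(8) by simp
        ultimately show ?case using ge(2) UW(7) by (simp add: subspace_diff)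
      qed
      have "((\<psi> \<circ> \<gamma>) has_vector_derivative A v) (at 0)"
      proof -
        have "(\<gamma> has_derivative (\<lambda>t. t *\<^sub>R v)) (at 0)" using ge(4) by (simp add: has_vector_derivative_def)
        from diff_chain_at[OF this] dA ge(2)
        have "((\<psi> \<circ> \<gamma>) has_derivative (A \<circ> (\<lambda>t. t *\<^sub>R v))) (at 0)" by simp
        moreover have "A \<circ> (\<lambda>t. t *\<^sub>R v) = (\<lambda>t. t *\<^sub>R A v)"
          unfolding A_def by (auto simp: blinfun.scaleR_right)
        ultimately show ?thesis by (simp add: has_vector_derivative_def)
      qed
      hence "A v \<in> L" using deriv_in_subspace[OF _ UW(7) ev] by blast
      moreover have "v = B (A v)" using fun_cong[OF BA, of v] by simp
      ultimately show "v \<in> B ` L" by blast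
    qed
  next
    show "B ` L \<subseteq> tangent_space M p"
    proof
      fix v assume "v \<in> B ` L"
      then obtain l where l: "l \<in> L" "v = B l" by blast
      obtain r where r: "r > 0" "ball (\<psi> p) r \<subseteq> W" using UW(3) pW open_contains_ball by blast
      define e where "e = r / (norm l + 1)"
      have e: "e > 0" unfolding e_def using r(1) norm_ge_zero[of l] by (intro divide_pos_pos) linarith+
      have "\<psi> p \<in> \<psi> ` (M \<inter> U)" using UW(2) assms(2) by blast
      hence pL: "\<psi> p \<in> L" using UW(8) by simp
      have inW: "\<psi> p + t *\<^sub>R l \<in> W" if "\<bar>t\<bar> < e" for t
      proof -
        have "norm (t *\<^sub>R l) = \<bar>t\<bar> * norm l" by simp
        also have "\<dots> \<le> e * norm l" using that by (simp add: mult_right_mono)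
        also have "\<dots> < r"
        proof -
          have h: "0 < norm l + 1" by (simp add: add_nonneg_pos)
          have "e * norm l = r * norm l / (norm l + 1)" by (simp add: e_def)
          also have "\<dots> < r" using h r(1) by (simp add: pos_divide_less_eq algebra_simps)
          finally show ?thesis .
        qed
        finally show ?thesis using r by (auto simp: dist_norm)
      qed
      have inM: "g (\<psi> p + t *\<^sub>R l) \<in> M" if "\<bar>t\<bar> < e" for t
      proof -
        have "\<psi> p + t *\<^sub>R l \<in> L \<inter> W" using inW[OF that] pL l UW(7) by (simp add: subspace_add subspace_scale)
        hence "\<psi> p + t *\<^sub>R l \<in> \<psi> ` (M \<inter> U)" using UW(8) by simp
        then obtain m where m: "m \<in> M \<inter> U" "\<psi> p + t *\<^sub>R l = \<psi> m" by (rule imageE)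
        have "g (\<psi> m) = m" using m(1) gpsi by blast
        thus ?thesis using m by simp
      qed
      have d: "((\<lambda>t. g (\<psi> p + t *\<^sub>R l)) has_vector_derivative B l) (at 0)"
        by (rule line_deriv[OF dB e]) simp
      show "v \<in> tangent_space M p"
        unfolding tangent_space_def
        apply (rule CollectI, rule exI[of _ "\<lambda>t. g (\<psi> p + t *\<^sub>R l)"], rule exI[of _ e])
        using e inM d l gpsi[OF UW(2)] by (simp add: abs_less_iff)
    qed
  qed
  thus ?thesis using linear_subspace_image[OF linB UW(7)] by simp
qed




lemma L2_le_norm:
  fixes x y :: "(real,'n::finite) vec"
  shows "L2_set (\<lambda>i. x $ i - y $ i) A \<le> norm (x - y)"
proof -
  have "L2_set (\<lambda>i. x $ i - y $ i) A = sqrt (\<Sum>i\<in>A. (x $ i - y $ i)\<^sup>2)" by (simp add: L2_set_def)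
  also have "\<dots> \<le> sqrt (\<Sum>i\<in>UNIV. (x $ i - y $ i)\<^sup>2)"
    by (rule real_sqrt_le_mono, rule sum_mono2) auto
  also have "\<dots> = norm (x - y)" by (simp add: norm_vec_def L2_set_def)
  finally show ?thesis .
qed

lemma small_line:
  fixes z :: "'a::real_normed_vector"
  assumes "r > 0"
  obtains e where "e > 0" "\<And>s. \<bar>s\<bar> < e \<Longrightarrow> norm (s *\<^sub>R z) < r"
proof -
  define e where "e = r / (norm z + 1)"
  have h: "0 < norm z + 1" by (simp add: add_nonneg_pos)
  have e: "e > 0" unfolding e_def using assms h by simp
  have "norm (s *\<^sub>R z) < r" if "\<bar>s\<bar> < e" for s
  proof -
    have "norm (s *\<^sub>R z) = \<bar>s\<bar> * norm z" by simp
    also have "\<dots> \<le> e * norm z" using that by (simp add: mult_right_mono)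
    also have "e * norm z = r * norm z / (norm z + 1)" by (simp add: e_def)
    also have "\<dots> < r" using h assms by (simp add: pos_divide_less_eq algebra_simps)
    finally show ?thesis .
  qed
  thus ?thesis using that e by blast
qed

theorem theorem4p12:
  fixes M :: "((real,'n::{finite,linorder}) vec) set"
    and d :: nat
    and \<sigma>s \<sigma> :: "'n \<Rightarrow> 'n"
    and xbar :: "(real,'n) vec"
    and \<delta> \<delta>1 \<delta>2 :: real
    and \<phi> \<phi>bar :: "(real,'n) vec \<Rightarrow> (real,'n) vec"
    and T N Nred \<B> D :: "((real,'n) vec) set"
  assumes M_manifold: "C2_submanifold M d" and M_conn: "connected M"
    and M_locsym: "locally_symmetric M"
    and char: "characteristic_perm M \<sigma>s"
    and \<sigma>_perm: "\<sigma> permutes UNIV"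
    and xbar_in: "xbar \<in> M \<inter> stratum \<sigma>"
    and \<delta>_pos: "\<delta> > 0"
    and strata: "\<forall>\<sigma>'. \<sigma>' permutes UNIV \<and> ball xbar \<delta> \<inter> stratum \<sigma>' \<noteq> {} \<longrightarrow> refines \<sigma>' \<sigma>"
    and strong: "strongly_locally_symmetric (M \<inter> ball xbar \<delta>)"
    and T_def: "T = tangent_space M xbar"
    and N_def: "N = normal_space M xbar"
    and diffeo: "diffeo_onto_image (M \<inter> ball xbar \<delta>) (orth_proj (aff xbar T))"
    and \<phi>_N: "\<forall>y\<in>aff xbar T \<inter> ball xbar \<delta>. \<phi> y \<in> N"
    and \<phi>_C2: "C2_on (aff xbar T \<inter> ball xbar \<delta>) \<phi>"
    and \<phi>_graph: "M \<inter> ball xbar \<delta> = {y + \<phi> y | y. y \<in> aff xbar T \<inter> ball xbar \<delta>}"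
    and Nred_def: "Nred = N \<inter> stratum_span \<sigma>"
    and \<delta>12: "\<delta>1 > 0" "\<delta>2 > 0"
    and B_def: "\<B> = {x. L2_set (\<lambda>i. x $ i - xbar $ i) {i. \<sigma>s i = i} < \<delta>1 \<and>
                         L2_set (\<lambda>i. x $ i - xbar $ i) {i. \<sigma>s i \<noteq> i} < \<delta>2}"
    and B_sub: "\<B> \<subseteq> ball xbar \<delta>"
    and D_def: "D = aff xbar (direct_sum T Nred) \<inter> \<B>"
    and \<phi>bar_def: "\<forall>x. \<phi>bar x = xbar + \<phi> (orth_proj (aff xbar T) x) - orth_proj (aff xbar Nred) x"
  shows "(\<forall>x\<in>D. orth_proj (aff xbar T) x \<in> aff xbar T \<inter> ball xbar \<delta> \<and> \<phi>bar x \<in> Nred)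
       \<and> (\<forall>x\<in>D. \<forall>\<sigma>'. \<sigma>' permutes UNIV \<and> pact \<sigma>' xbar = xbar \<longrightarrow> \<phi>bar (pact \<sigma>' x) = \<phi>bar x)
       \<and> (\<forall>x\<in>D. \<phi>bar x = 0 \<longleftrightarrow> x \<in> M \<inter> ball xbar \<delta>)
       \<and> (\<exists>L. (\<phi>bar has_derivative L) (at xbar within D))
       \<and> (\<forall>L. (\<phi>bar has_derivative L) (at xbar within D) \<longrightarrow> L ` (direct_sum T Nred) = Nred)"
proof -
  have xM: "xbar \<in> M" and xs: "xbar \<in> stratum \<sigma>" using xbar_in by auto
  have Tsub: "subspace T" using tangent_subspace[OF M_manifold xM] T_def by simp
  have Nset: "N = {w. \<forall>v\<in>T. w \<bullet> v = 0}" using N_def T_def normal_space_def by simp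
  have Nsub: "subspace N" unfolding Nset subspace_def by (auto simp: inner_add_left)
  have SSsub: "subspace (stratum_span \<sigma>)" unfolding subspace_def stratum_span_def by auto
  have Nredsub: "subspace Nred" using Nred_def Nsub SSsub subspace_inter by simp
  have NredN: "Nred \<subseteq> N" using Nred_def by auto
  have perp: "\<And>w v. w \<in> N \<Longrightarrow> v \<in> T \<Longrightarrow> w \<bullet> v = 0" using Nset by auto
  have TN0: "\<And>v. v \<in> T \<Longrightarrow> v \<in> N \<Longrightarrow> v = 0" using perp by (metis inner_eq_zero_iff)
  have xS: "xbar \<in> M \<inter> ball xbar \<delta>" using xM \<delta>_pos by simp
  have SI: "\<And>\<sigma>'. \<sigma>' permutes UNIV \<Longrightarrow> pact \<sigma>' xbar = xbar \<Longrightarrow> pact \<sigma>' ` (M \<inter> ball xbar \<delta>) = M \<inter> ball xbar \<delta>"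
    using strong xS unfolding strongly_locally_symmetric_def by blast
  have pdist: "dist xbar (pact \<sigma>' y) = dist xbar y" if "\<sigma>' permutes UNIV" "pact \<sigma>' xbar = xbar" for \<sigma>' y
  proof -
    have "dist xbar (pact \<sigma>' y) = norm (pact \<sigma>' xbar - pact \<sigma>' y)" using that by (simp add: dist_norm)
    also have "\<dots> = norm (xbar - y)" using that(1) by (simp add: pact_diff[symmetric] pact_norm)
    finally show ?thesis by (simp add: dist_norm)
  qed
  have Tinv: "pact \<sigma>' v \<in> T" if s: "\<sigma>' permutes UNIV" "pact \<sigma>' xbar = xbar" and v: "v \<in> T" for \<sigma>' v
  proof -
    obtain \<gamma> e where ge: "e > 0" "\<gamma> 0 = xbar" "\<forall>t\<in>{-e<..<e}. \<gamma> t \<in> M"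
        "(\<gamma> has_vector_derivative v) (at 0)" using v unfolding T_def tangent_space_def by blast
    have "continuous (at 0) \<gamma>" using ge(4) has_vector_derivative_continuous by blast
    then obtain e' where e': "e' > 0" "\<forall>t. dist t 0 < e' \<longrightarrow> dist (\<gamma> t) (\<gamma> 0) < \<delta>"
      unfolding continuous_at_eps_delta using \<delta>_pos by blast
    define e2 where "e2 = min e e'"
    have inM: "pact \<sigma>' (\<gamma> t) \<in> M" if "t \<in> {-e2<..<e2}" for t
    proof -
      have "\<gamma> t \<in> M" using ge(3) that by (auto simp: e2_def)
      moreover have "dist (\<gamma> t) xbar < \<delta>" using e' that ge(2) by (auto simp: e2_def dist_real_def)
      ultimately have "\<gamma> t \<in> M \<inter> ball xbar \<delta>" by (simp add: dist_commute)
      hence "pact \<sigma>' (\<gamma> t) \<in> pact \<sigma>' ` (M \<inter> ball xbar \<delta>)" by (rule imageI)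
      thus ?thesis using SI[OF s] by blast
    qed
    have "(\<gamma> has_derivative (\<lambda>t. t *\<^sub>R v)) (at 0)" using ge(4) by (simp add: has_vector_derivative_def)
    from bounded_linear.has_derivative[OF bounded_linear_pact this]
    have "((\<lambda>t. pact \<sigma>' (\<gamma> t)) has_vector_derivative pact \<sigma>' v) (at 0)"
      by (simp add: has_vector_derivative_def pact_scale)
    moreover have "e2 > 0" using ge(1) e'(1) by (simp add: e2_def)
    ultimately show ?thesis unfolding T_def tangent_space_def
      apply (intro CollectI exI[of _ "\<lambda>t. pact \<sigma>' (\<gamma> t)"] exI[of _ e2] conjI)
      using inM ge(2) s(2) by simp_all
  qed
  have Ninv: "pact \<sigma>' w \<in> N" if s: "\<sigma>' permutes UNIV" "pact \<sigma>' xbar = xbar" and w: "w \<in> N" for \<sigma>' w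
  proof -
    have si: "inv \<sigma>' permutes UNIV" "pact (inv \<sigma>') xbar = xbar"
      using s permutes_inv pact_fix_inv by auto
    have "pact \<sigma>' w \<bullet> v = 0" if v: "v \<in> T" for v
    proof -
      have "pact \<sigma>' w \<bullet> v = pact \<sigma>' w \<bullet> pact \<sigma>' (pact (inv \<sigma>') v)" using pact_pact_inv[OF s(1)] by simp
      also have "\<dots> = w \<bullet> pact (inv \<sigma>') v" using pact_inner[OF s(1)] by simp
      also have "\<dots> = 0" using perp[OF w Tinv[OF si v]] .
      finally show ?thesis .
    qed
    thus ?thesis using Nset by simp
  qed
  have SSfix: "pact \<sigma>' z = z" if s: "\<sigma>' permutes UNIV" "pact \<sigma>' xbar = xbar" and z: "z \<in> stratum_span \<sigma>" for \<sigma>' z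
  proof -
    have "pact \<sigma>' z $ k = z $ k" for k
    proof -
      have "xbar $ (inv \<sigma>' k) = xbar $ k" using arg_cong[OF s(2), of "\<lambda>x. x $ k"] by simp
      hence "same_orbit \<sigma> (inv \<sigma>' k) k" using xs unfolding stratum_def by blast
      thus ?thesis using z unfolding stratum_span_def by simp
    qed
    thus ?thesis by (simp add: vec_eq_iff)
  qed
  have Dominv: "pact \<sigma>' y \<in> aff xbar T \<inter> ball xbar \<delta>" if s: "\<sigma>' permutes UNIV" "pact \<sigma>' xbar = xbar"
    and y: "y \<in> aff xbar T \<inter> ball xbar \<delta>" for \<sigma>' y
  proof -
    obtain t where t: "t \<in> T" "y = xbar + t" using y by (auto simp: aff_def)
    have "pact \<sigma>' y = xbar + pact \<sigma>' t" using t s(2) by (simp add: pact_add)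
    hence "pact \<sigma>' y \<in> aff xbar T" using Tinv[OF s t(1)] by (auto simp: aff_def)
    moreover have "pact \<sigma>' y \<in> ball xbar \<delta>" using y pdist[OF s] by simp
    ultimately show ?thesis by simp
  qed
  have graphD: "y + \<phi> y \<in> M \<inter> ball xbar \<delta>" if "y \<in> aff xbar T \<inter> ball xbar \<delta>" for y
  proof -
    have "y + \<phi> y \<in> {y + \<phi> y | y. y \<in> aff xbar T \<inter> ball xbar \<delta>}" using that by blast
    thus ?thesis using \<phi>_graph by simp
  qed
  have graph_uniq: "z = y \<and> \<phi> z = u" if y: "y \<in> aff xbar T" "u \<in> N" and z: "z \<in> aff xbar T \<inter> ball xbar \<delta>"
    and eq: "y + u = z + \<phi> z" for y u z
  proof -
    obtain t where t: "t \<in> T" "y = xbar + t" using y by (auto simp: aff_def)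
    obtain t' where t': "t' \<in> T" "z = xbar + t'" using z by (auto simp: aff_def)
    have "t' - t = u - \<phi> z" using eq t t' by (simp add: algebra_simps)
    moreover have "t' - t \<in> T" using t t' Tsub subspace_diff by blast
    moreover have "u - \<phi> z \<in> N" using y(2) \<phi>_N z Nsub subspace_diff by blast
    ultimately have "t' - t = 0" using TN0 by metis
    thus ?thesis using eq t t' by simp
  qed
  have equiv: "\<phi> (pact \<sigma>' y) = pact \<sigma>' (\<phi> y)" if s: "\<sigma>' permutes UNIV" "pact \<sigma>' xbar = xbar"
    and y: "y \<in> aff xbar T \<inter> ball xbar \<delta>" for \<sigma>' y
  proof -
    have "pact \<sigma>' (y + \<phi> y) \<in> pact \<sigma>' ` (M \<inter> ball xbar \<delta>)" using graphD[OF y] by (rule imageI)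
    hence "pact \<sigma>' (y + \<phi> y) \<in> M \<inter> ball xbar \<delta>" using SI[OF s] by simp
    hence "pact \<sigma>' (y + \<phi> y) \<in> {y + \<phi> y | y. y \<in> aff xbar T \<inter> ball xbar \<delta>}" using \<phi>_graph by simp
    then obtain z where z: "z \<in> aff xbar T \<inter> ball xbar \<delta>" "pact \<sigma>' (y + \<phi> y) = z + \<phi> z"
      by blast
    have "pact \<sigma>' y + pact \<sigma>' (\<phi> y) = z + \<phi> z" using z(2) by (simp add: pact_add)
    moreover have "pact \<sigma>' y \<in> aff xbar T" using Dominv[OF s y] by simp
    moreover have "pact \<sigma>' (\<phi> y) \<in> N" using Ninv[OF s] \<phi>_N y by blast
    ultimately have "z = pact \<sigma>' y \<and> \<phi> z = pact \<sigma>' (\<phi> y)" using graph_uniq z(1) by blast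
    thus ?thesis by metis
  qed
  have phiNred: "\<phi> y \<in> Nred" if yD: "y \<in> aff xbar T \<inter> ball xbar \<delta>" for y
  proof -
    have \<phi>N: "\<phi> y \<in> N" using \<phi>_N yD by blast
    have "\<phi> y \<in> stratum_span \<sigma>" unfolding stratum_span_def
    proof (intro CollectI allI impI)
      fix i j assume ij: "same_orbit \<sigma> i j"
      show "\<phi> y $ i = \<phi> y $ j"
      proof (cases "i = j")
        case True thus ?thesis by simp
      next
        case ne: False
        define \<tau> where "\<tau> = Transposition.transpose i j"
        have \<tau>p: "\<tau> permutes UNIV" unfolding \<tau>_def by (rule permutes_swap_id) simp_all
        have xij: "xbar $ i = xbar $ j" using xs ij unfolding stratum_def by blast
        have \<tau>x: "pact \<tau> xbar = xbar" by (simp add: vec_eq_iff \<tau>_def Transposition.transpose_def xij)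
        define w :: "(real,'n) vec" where "w = axis i 1 - axis j 1"
        have vw: "v \<bullet> w = v $ i - v $ j" for v by (simp add: w_def inner_diff_right inner_axis)
        have p\<tau>: "pact \<tau> v = v - (v \<bullet> w) *\<^sub>R w" for v
          unfolding vec_eq_iff vw by (simp add: \<tau>_def Transposition.transpose_def w_def axis_def ne)
        show ?thesis
        proof (cases "w \<in> T")
          case True
          have "\<phi> y \<bullet> w = 0" using perp[OF \<phi>N True] .
          thus ?thesis by (simp add: vw)
        next
          case False
          have Tw: "v \<bullet> w = 0" if v: "v \<in> T" for v
          proof (rule ccontr)
            assume nz: "v \<bullet> w \<noteq> 0"
            have "v - pact \<tau> v \<in> T" using Tinv[OF \<tau>p \<tau>x v] v Tsub subspace_diff by blast
            hence "(1 / (v \<bullet> w)) *\<^sub>R (v - pact \<tau> v) \<in> T" using Tsub subspace_scale by blast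
            moreover have "(1 / (v \<bullet> w)) *\<^sub>R (v - pact \<tau> v) = w" using nz by (simp add: p\<tau>[of v])
            ultimately show False using False by simp
          qed
          obtain t where t: "t \<in> T" "y = xbar + t" using yD by (auto simp: aff_def)
          have "pact \<tau> y = y" using t \<tau>x Tw[OF t(1)] by (simp add: pact_add p\<tau>[of t])
          hence "\<phi> y = pact \<tau> (\<phi> y)" using equiv[OF \<tau>p \<tau>x yD] by simp
          hence "\<phi> y $ i = pact \<tau> (\<phi> y) $ i" by simp
          thus ?thesis by (simp add: \<tau>_def)
        qed
      qed
    qed
    thus ?thesis using \<phi>N Nred_def by simp
  qed
  have xdec: "\<exists>t n. t \<in> T \<and> n \<in> Nred \<and> x = xbar + (t + n)" if "x \<in> D" for x
    using that unfolding D_def aff_def direct_sum_def by blast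
  have PTeq: "orth_proj (aff xbar T) (xbar + (t + n)) = xbar + t" if "t \<in> T" "n \<in> N" for t n
    using orth_proj_eq[OF Tsub that(1), of n xbar] perp[OF that(2)] by (simp add: add.assoc)
  have PNeq: "orth_proj (aff xbar Nred) (xbar + (t + n)) = xbar + n" if "t \<in> T" "n \<in> Nred" for t n
  proof -
    have "\<forall>u\<in>Nred. t \<bullet> u = 0" using perp that(1) NredN by (auto simp: inner_commute)
    from orth_proj_eq[OF Nredsub that(2) this, of xbar] show ?thesis by (simp add: algebra_simps)
  qed
  have phibar_eq: "\<phi>bar (xbar + (t + n)) = \<phi> (xbar + t) - n" if "t \<in> T" "n \<in> Nred" for t n
    using \<phi>bar_def PTeq[OF that(1)] PNeq[OF that] that(2) NredN by auto
  have Dom_t: "xbar + t \<in> aff xbar T \<inter> ball xbar \<delta>" if "t \<in> T" "n \<in> Nred" "xbar + (t + n) \<in> D" for t n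
  proof -
    have "orthogonal t n" using perp[of n t] that NredN by (auto simp: orthogonal_def inner_commute)
    hence "(norm (t + n))\<^sup>2 = (norm t)\<^sup>2 + (norm n)\<^sup>2" by (rule norm_add_Pythagorean)
    hence "(norm t)\<^sup>2 \<le> (norm (t + n))\<^sup>2" by simp
    hence "norm t \<le> norm (t + n)" by (rule power2_le_imp_le) simp
    moreover have "norm (t + n) < \<delta>"
    proof -
      have "xbar + (t + n) \<in> ball xbar \<delta>" using that(3) D_def B_sub by blast
      thus ?thesis using norm_minus_cancel[of "t + n"] by (simp add: dist_norm)
    qed
    ultimately have "xbar + t \<in> ball xbar \<delta>" by (simp add: dist_norm)
    thus ?thesis using that(1) by (auto simp: aff_def)
  qed
  have part1: "\<forall>x\<in>D. orth_proj (aff xbar T) x \<in> aff xbar T \<inter> ball xbar \<delta> \<and> \<phi>bar x \<in> Nred"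
  proof
    fix x assume x: "x \<in> D"
    then obtain t n where tn: "t \<in> T" "n \<in> Nred" "x = xbar + (t + n)" using xdec by blast
    have "orth_proj (aff xbar T) x = xbar + t" using PTeq[OF tn(1)] tn NredN by auto
    moreover have dt: "xbar + t \<in> aff xbar T \<inter> ball xbar \<delta>" using Dom_t[OF tn(1,2)] x tn(3) by simp
    moreover have "\<phi>bar x = \<phi> (xbar + t) - n" using phibar_eq[OF tn(1,2)] tn(3) by simp
    moreover have "\<phi> (xbar + t) - n \<in> Nred" using phiNred[OF dt] tn(2) Nredsub subspace_diff by blast
    ultimately show "orth_proj (aff xbar T) x \<in> aff xbar T \<inter> ball xbar \<delta> \<and> \<phi>bar x \<in> Nred" by simp
  qed
  have part2: "\<forall>x\<in>D. \<forall>\<sigma>'. \<sigma>' permutes UNIV \<and> pact \<sigma>' xbar = xbar \<longrightarrow> \<phi>bar (pact \<sigma>' x) = \<phi>bar x"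
  proof (intro ballI allI impI)
    fix x \<sigma>' assume x: "x \<in> D" and s: "\<sigma>' permutes UNIV \<and> pact \<sigma>' xbar = xbar"
    hence s1: "\<sigma>' permutes UNIV" and s2: "pact \<sigma>' xbar = xbar" by auto
    obtain t n where tn: "t \<in> T" "n \<in> Nred" "x = xbar + (t + n)" using xdec x by blast
    have dt: "xbar + t \<in> aff xbar T \<inter> ball xbar \<delta>" using Dom_t[OF tn(1,2)] x tn(3) by simp
    have nfix: "pact \<sigma>' n = n" using SSfix[OF s1 s2] tn(2) Nred_def by blast
    have px: "pact \<sigma>' x = xbar + (pact \<sigma>' t + n)" using tn(3) s2 nfix by (simp add: pact_add)
    have pt: "pact \<sigma>' t \<in> T" using Tinv[OF s1 s2 tn(1)] .
    have "\<phi>bar (pact \<sigma>' x) = \<phi> (xbar + pact \<sigma>' t) - n" using phibar_eq[OF pt tn(2)] px by simp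
    also have "xbar + pact \<sigma>' t = pact \<sigma>' (xbar + t)" using s2 by (simp add: pact_add)
    also have "\<phi> (pact \<sigma>' (xbar + t)) = pact \<sigma>' (\<phi> (xbar + t))" using equiv[OF s1 s2 dt] .
    also have "\<dots> = \<phi> (xbar + t)" using SSfix[OF s1 s2] phiNred[OF dt] Nred_def by blast
    finally show "\<phi>bar (pact \<sigma>' x) = \<phi>bar x" using phibar_eq[OF tn(1,2)] tn(3) by simp
  qed
  have part3: "\<forall>x\<in>D. \<phi>bar x = 0 \<longleftrightarrow> x \<in> M \<inter> ball xbar \<delta>"
  proof
    fix x assume x: "x \<in> D"
    then obtain t n where tn: "t \<in> T" "n \<in> Nred" "x = xbar + (t + n)" using xdec by blast
    have dt: "xbar + t \<in> aff xbar T \<inter> ball xbar \<delta>" using Dom_t[OF tn(1,2)] x tn(3) by simp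
    have pe: "\<phi>bar x = \<phi> (xbar + t) - n" using phibar_eq[OF tn(1,2)] tn(3) by simp
    show "\<phi>bar x = 0 \<longleftrightarrow> x \<in> M \<inter> ball xbar \<delta>"
    proof
      assume "\<phi>bar x = 0"
      hence "n = \<phi> (xbar + t)" using pe by simp
      hence "x = (xbar + t) + \<phi> (xbar + t)" using tn(3) by (simp add: add.assoc)
      thus "x \<in> M \<inter> ball xbar \<delta>" using graphD[OF dt] by simp
    next
      assume "x \<in> M \<inter> ball xbar \<delta>"
      hence "x \<in> {y + \<phi> y | y. y \<in> aff xbar T \<inter> ball xbar \<delta>}" using \<phi>_graph by simp
      then obtain z where z: "z \<in> aff xbar T \<inter> ball xbar \<delta>" "x = z + \<phi> z" by blast
      have "(xbar + t) + n = z + \<phi> z" using z(2) tn(3) by (simp add: add.assoc)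
      moreover have "xbar + t \<in> aff xbar T" using dt by simp
      moreover have "n \<in> N" using tn(2) NredN by blast
      ultimately have "z = xbar + t \<and> \<phi> z = n" using graph_uniq z(1) by blast
      thus "\<phi>bar x = 0" using pe by auto
    qed
  qed
  obtain \<phi>' where \<phi>': "\<forall>y\<in>aff xbar T \<inter> ball xbar \<delta>. (\<phi> has_derivative blinfun_apply (\<phi>' y)) (at y within aff xbar T \<inter> ball xbar \<delta>)"
    using \<phi>_C2 unfolding C2_on_def by (elim exE conjE)
  define PT where "PT = lproj xbar T"
  define PN where "PN = lproj xbar Nred"
  have blPT: "bounded_linear PT" unfolding PT_def using linear_lproj[OF Tsub] linear_conv_bounded_linear by blast
  have blPN: "bounded_linear PN" unfolding PN_def using linear_lproj[OF Nredsub] linear_conv_bounded_linear by blast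
  have PT0: "PT 0 = 0" using blPT linear_0 bounded_linear.linear by blast
  have xDom: "xbar \<in> aff xbar T \<inter> ball xbar \<delta>" using \<delta>_pos Tsub subspace_0 by (force simp: aff_def)
  have phibar_fun: "\<phi>bar = (\<lambda>x. xbar + \<phi> (xbar + PT (x - xbar)) - (xbar + PN (x - xbar)))"
    using \<phi>bar_def by (simp add: fun_eq_iff orth_proj_lproj PT_def PN_def)
  have dPT: "((\<lambda>x. xbar + PT (x - xbar)) has_derivative PT) (at xbar within D)"
    by (auto intro!: derivative_eq_intros bounded_linear.has_derivative[OF blPT])
  have dPN: "((\<lambda>x. xbar + PN (x - xbar)) has_derivative PN) (at xbar within D)"
    by (auto intro!: derivative_eq_intros bounded_linear.has_derivative[OF blPN])
  have imgD: "(\<lambda>x. xbar + PT (x - xbar)) ` D \<subseteq> aff xbar T \<inter> ball xbar \<delta>"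
    using part1 by (auto simp: orth_proj_lproj PT_def)
  have d\<phi>: "(\<phi> has_derivative blinfun_apply (\<phi>' xbar)) (at ((\<lambda>x. xbar + PT (x - xbar)) xbar) within ((\<lambda>x. xbar + PT (x - xbar)) ` D))"
    using has_derivative_subset[OF bspec[OF \<phi>' xDom] imgD] PT0 by simp
  define L0 where "L0 = (\<lambda>z. blinfun_apply (\<phi>' xbar) (PT z) - PN z)"
  have dL0: "(\<phi>bar has_derivative L0) (at xbar within D)"
  proof -
    have "((\<lambda>x. \<phi> (xbar + PT (x - xbar))) has_derivative (\<lambda>z. blinfun_apply (\<phi>' xbar) (PT z))) (at xbar within D)"
      by (rule has_derivative_in_compose[OF dPT d\<phi>])
    from has_derivative_diff[OF has_derivative_add[OF has_derivative_const[of xbar] this] dPN]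
    show ?thesis unfolding phibar_fun L0_def by simp
  qed
  have DS_D: "\<exists>e>0. \<forall>s. \<bar>s\<bar> < e \<longrightarrow> xbar + s *\<^sub>R z \<in> D" if z: "z \<in> direct_sum T Nred" for z
  proof -
    obtain t n where tn: "t \<in> T" "n \<in> Nred" "z = t + n" using z unfolding direct_sum_def by blast
    define r where "r = min \<delta>1 \<delta>2"
    have r: "r > 0" using \<delta>12 by (simp add: r_def)
    obtain e where e: "e > 0" "\<And>s. \<bar>s\<bar> < e \<Longrightarrow> norm (s *\<^sub>R z) < r" using small_line[OF r] by metis
    have "xbar + s *\<^sub>R z \<in> D" if s: "\<bar>s\<bar> < e" for s
    proof -
      have "s *\<^sub>R z = s *\<^sub>R t + s *\<^sub>R n" using tn(3) by (simp add: scaleR_add_right)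
      moreover have "s *\<^sub>R t \<in> T" using tn(1) Tsub subspace_scale by blast
      moreover have "s *\<^sub>R n \<in> Nred" using tn(2) Nredsub subspace_scale by blast
      ultimately have "s *\<^sub>R z \<in> direct_sum T Nred" unfolding direct_sum_def by blast
      hence a: "xbar + s *\<^sub>R z \<in> aff xbar (direct_sum T Nred)" unfolding aff_def by blast
      have nz: "norm ((xbar + s *\<^sub>R z) - xbar) < r" using e(2)[OF s] by simp
      have "L2_set (\<lambda>i. (xbar + s *\<^sub>R z) $ i - xbar $ i) A < r" for A
        using L2_le_norm[of "xbar + s *\<^sub>R z" xbar A] nz by linarith
      hence "L2_set (\<lambda>i. (xbar + s *\<^sub>R z) $ i - xbar $ i) A < \<delta>1 \<and> L2_set (\<lambda>i. (xbar + s *\<^sub>R z) $ i - xbar $ i) A < \<delta>2" for A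
        unfolding r_def by (smt (verit) min.cobounded1 min.cobounded2)
      hence "xbar + s *\<^sub>R z \<in> \<B>" unfolding B_def by blast
      thus ?thesis using a D_def by blast
    qed
    thus ?thesis using e(1) by blast
  qed
  have uniq: "L z = L0 z" if L: "(\<phi>bar has_derivative L) (at xbar within D)" and z: "z \<in> direct_sum T Nred" for L z
  proof -
    obtain e where e: "e > 0" "\<forall>s. \<bar>s\<bar> < e \<longrightarrow> xbar + s *\<^sub>R z \<in> D" using DS_D[OF z] by blast
    show ?thesis using vector_derivative_unique_at[OF line_deriv[OF L e] line_deriv[OF dL0 e]] .
  qed
  have phi'Nred: "blinfun_apply (\<phi>' xbar) t \<in> Nred" if t: "t \<in> T" for t
  proof -
    obtain e where e: "e > 0" "\<And>s. \<bar>s\<bar> < e \<Longrightarrow> norm (s *\<^sub>R t) < \<delta>" using small_line[OF \<delta>_pos] by metis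
    have inDom: "xbar + s *\<^sub>R t \<in> aff xbar T \<inter> ball xbar \<delta>" if s: "\<bar>s\<bar> < e" for s
    proof -
      have "s *\<^sub>R t \<in> T" using t Tsub subspace_scale by blast
      moreover have "dist xbar (xbar + s *\<^sub>R t) < \<delta>" using e(2)[OF s] by (simp add: dist_norm)
      ultimately show ?thesis by (auto simp: aff_def)
    qed
    have d: "((\<lambda>s. \<phi> (xbar + s *\<^sub>R t)) has_vector_derivative blinfun_apply (\<phi>' xbar) t) (at 0)"
      using line_deriv[OF bspec[OF \<phi>' xDom] e(1)] inDom by blast
    have ev2: "\<forall>\<^sub>F s in at (0::real). s \<in> {-e<..<e}"
      using eventually_at_in_open'[of "{-e<..<e}" 0] e(1) by simp
    have ev: "\<forall>\<^sub>F s in at 0. \<phi> (xbar + s *\<^sub>R t) - \<phi> (xbar + 0 *\<^sub>R t) \<in> Nred"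
      using ev2
    proof (rule eventually_mono)
      fix s :: real assume "s \<in> {-e<..<e}"
      hence "\<bar>s\<bar> < e" by auto
      hence "\<phi> (xbar + s *\<^sub>R t) \<in> Nred" using phiNred inDom by blast
      moreover have "\<phi> (xbar + 0 *\<^sub>R t) \<in> Nred" using phiNred xDom by simp
      ultimately show "\<phi> (xbar + s *\<^sub>R t) - \<phi> (xbar + 0 *\<^sub>R t) \<in> Nred" using Nredsub subspace_diff by blast
    qed
    show ?thesis by (rule deriv_in_subspace[OF d Nredsub ev])
  qed
  have imgL0: "L0 ` (direct_sum T Nred) = Nred"
  proof
    show "L0 ` direct_sum T Nred \<subseteq> Nred"
    proof
      fix m assume "m \<in> L0 ` direct_sum T Nred"
      then obtain z where z: "z \<in> direct_sum T Nred" "m = L0 z" by blast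
      obtain t n where tn: "t \<in> T" "n \<in> Nred" "z = t + n" using z(1) unfolding direct_sum_def by blast
      have "PT z = t" unfolding PT_def tn(3) by (rule lproj_eq[OF Tsub tn(1)]) (use perp tn(2) NredN in blast)
      moreover have "PN z = n"
      proof -
        have "\<forall>u\<in>Nred. t \<bullet> u = 0" using perp tn(1) NredN by (auto simp: inner_commute)
        from lproj_eq[OF Nredsub tn(2) this, of xbar] show ?thesis unfolding PN_def tn(3) by (simp add: add.commute)
      qed
      ultimately have "m = blinfun_apply (\<phi>' xbar) t - n" using z(2) by (simp add: L0_def)
      thus "m \<in> Nred" using phi'Nred[OF tn(1)] tn(2) Nredsub subspace_diff by blast
    qed
  next
    show "Nred \<subseteq> L0 ` direct_sum T Nred"
    proof
      fix m assume m: "m \<in> Nred"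
      have mm: "- m \<in> Nred" using m Nredsub subspace_neg by blast
      have z: "0 + - m \<in> direct_sum T Nred" using Tsub subspace_0 mm unfolding direct_sum_def by blast
      have "PT (0 + - m) = 0" unfolding PT_def by (rule lproj_eq[OF Tsub subspace_0[OF Tsub]]) (use perp mm NredN in blast)
      moreover have "PN (0 + - m) = - m"
      proof -
        have "\<forall>u\<in>Nred. (0::(real,'n) vec) \<bullet> u = 0" by simp
        from lproj_eq[OF Nredsub mm this, of xbar] show ?thesis unfolding PN_def by simp
      qed
      ultimately have "L0 (0 + - m) = m" by (simp add: L0_def blinfun.zero_right)
      thus "m \<in> L0 ` direct_sum T Nred" using z by (metis imageI)
    qed
  qed
  show ?thesis
  proof (intro conjI)
    show "\<exists>L. (\<phi>bar has_derivative L) (at xbar within D)" using dL0 by blast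
    show "\<forall>L. (\<phi>bar has_derivative L) (at xbar within D) \<longrightarrow> L ` direct_sum T Nred = Nred"
    proof (intro allI impI)
      fix L assume L: "(\<phi>bar has_derivative L) (at xbar within D)"
      have "L ` direct_sum T Nred = L0 ` direct_sum T Nred" by (rule image_cong) (auto intro: uniq[OF L])
      thus "L ` direct_sum T Nred = Nred" using imgL0 by simp
    qed
  qed (rule part1, rule part2, rule part3)
qed


end
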